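(* Let $(G,\mathcal{P})$ be a group pair and $S$ a finite generating set of $G$. (i) $\hat R_\infty(G,\mathcal{P},S)$ is (non-equivariantly) contractible. (ii) For every $\alpha\in\mathbb{N}$, the barycentric subdivision $\hat R_\alpha(G,\mathcal{P},S)'$ of $\hat R_\alpha(G,\mathcal{P},S)$ is a cocompact $G$-CW-complex, and every cell of $\hat R_\alpha(G,\mathcal{P},S)'\smallsetminus G/\mathcal{P}$ has finite stabiliser.
   Context: A group pair $(G,\mathcal{P})$: $G$ finitely generated, $\mathcal{P}$ a non-empty finite collection of subgroups (repetitions allowed); $G/\mathcal{P}=\coprod_{P\in\mathcal{P}}G/P$, elements viewed as cosets (subsets of $G$) and called cone vertices. $d_S$ is the word metric. A finite $U\subseteq G\sqcup G/\mathcal{P}$ is a unicone subset of diameter $\le\alpha$ if $U\cap G$ has $d_S$-diameter $\le\alpha$ and $U$ contains at most one cone vertex $A$, in which case every $g\in U\cap G$ has some $a\in A$ with $d_S(g,a)\le\alpha$. $\hat R_\alpha(G,\mathcal{P},S)$ is the simplicial complex whose simplices are these subsets, and $\hat R_\infty(G,\mathcal{P},S)=\varinjlim_\alpha\hat R_\alpha(G,\mathcal{P},S)$ (union). $G$ acts simplicially by left multiplication on $G\sqcup G/\mathcal{P}$; complexes are identified with their geometric realisations, and the vertices $G/\mathcal{P}$ are vertices of the subdivision. *)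

theory Defs
  imports "HOL-Analysis.Analysis" "HOL-Algebra.Algebra"
begin

definition word_length :: "('g, 'b) monoid_scheme \<Rightarrow> 'g set \<Rightarrow> 'g \<Rightarrow> nat" where
  "word_length G S g =
     (LEAST n. \<exists>ws. length ws = n \<and> set ws \<subseteq> S \<union> (m_inv G ` S)
                   \<and> foldr (\<lambda>x y. x \<otimes>\<^bsub>G\<^esub> y) ws \<one>\<^bsub>G\<^esub> = g)"

definition word_dist :: "('g, 'b) monoid_scheme \<Rightarrow> 'g set \<Rightarrow> 'g \<Rightarrow> 'g \<Rightarrow> nat" where
  "word_dist G S g h = word_length G S (inv\<^bsub>G\<^esub> g \<otimes>\<^bsub>G\<^esub> h)"

text \<open>The collection P is a non-empty list of subgroups (repetitions allowed);
  a cone vertex is a pair (i, A) with A a left coset of the i-th subgroup, so that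
  G/P is the disjoint union of the G/P_i.\<close>
type_synonym 'g vert = "'g + nat \<times> 'g set"

definition cone_vertices :: "('g, 'b) monoid_scheme \<Rightarrow> 'g set list \<Rightarrow> (nat \<times> 'g set) set" where
  "cone_vertices G Ps = {(i, A). i < length Ps \<and> (\<exists>g\<in>carrier G. A = g <#\<^bsub>G\<^esub> (Ps ! i))}"

definition vertices :: "('g, 'b) monoid_scheme \<Rightarrow> 'g set list \<Rightarrow> 'g vert set" where
  "vertices G Ps = Inl ` carrier G \<union> Inr ` cone_vertices G Ps"

definition unicone :: "('g, 'b) monoid_scheme \<Rightarrow> 'g set \<Rightarrow> 'g set list \<Rightarrow> nat \<Rightarrow> 'g vert set \<Rightarrow> bool" where
  "unicone G S Ps \<alpha> U \<longleftrightarrow>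
     finite U \<and> U \<noteq> {} \<and> U \<subseteq> vertices G Ps \<and>
     (\<forall>g\<in>Inl -` U. \<forall>h\<in>Inl -` U. word_dist G S g h \<le> \<alpha>) \<and>
     card (Inr -` U) \<le> 1 \<and>
     (\<forall>c\<in>Inr -` U. \<forall>g\<in>Inl -` U. \<exists>a\<in>snd c. word_dist G S g a \<le> \<alpha>)"

definition Rhat :: "('g, 'b) monoid_scheme \<Rightarrow> 'g set \<Rightarrow> 'g set list \<Rightarrow> nat \<Rightarrow> 'g vert set set" where
  "Rhat G S Ps \<alpha> = {U. unicone G S Ps \<alpha> U}"

definition Rhat_inf :: "('g, 'b) monoid_scheme \<Rightarrow> 'g set \<Rightarrow> 'g set list \<Rightarrow> 'g vert set set" where
  "Rhat_inf G S Ps = (\<Union>\<alpha>. Rhat G S Ps \<alpha>)"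

definition geom_simplex :: "'v set \<Rightarrow> ('v \<Rightarrow> real) set" where
  "geom_simplex \<sigma> = {f. (\<forall>v. 0 \<le> f v) \<and> (\<forall>v. v \<notin> \<sigma> \<longrightarrow> f v = 0) \<and> sum f \<sigma> = 1}"

definition realisation :: "'v set set \<Rightarrow> ('v \<Rightarrow> real) topology" where
  "realisation K = topology (\<lambda>U. U \<subseteq> (\<Union>\<sigma>\<in>K. geom_simplex \<sigma>) \<and>
      (\<forall>\<sigma>\<in>K. openin (subtopology (powertop_real UNIV) (geom_simplex \<sigma>)) (U \<inter> geom_simplex \<sigma>)))"

text \<open>Barycentric subdivision: vertices are the simplices of K, simplices are the
  finite non-empty chains of simplices.\<close>
definition bary :: "'v set set \<Rightarrow> 'v set set set" where
  "bary K = {c. finite c \<and> c \<noteq> {} \<and> c \<subseteq> K \<and> (\<forall>\<sigma>\<in>c. \<forall>\<tau>\<in>c. \<sigma> \<subseteq> \<tau> \<or> \<tau> \<subseteq> \<sigma>)}"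

fun vact :: "('g, 'b) monoid_scheme \<Rightarrow> 'g \<Rightarrow> 'g vert \<Rightarrow> 'g vert" where
  "vact G g (Inl h) = Inl (g \<otimes>\<^bsub>G\<^esub> h)"
| "vact G g (Inr (i, A)) = Inr (i, g <#\<^bsub>G\<^esub> A)"

definition bary_vact :: "('g, 'b) monoid_scheme \<Rightarrow> 'g \<Rightarrow> 'g vert set \<Rightarrow> 'g vert set" where
  "bary_vact G g \<sigma> = vact G g ` \<sigma>"

text \<open>A simplicial complex L (cells = simplices, with the weak topology) with an
  action rho of G on its vertices, acting simplicially, is a G-CW-complex (with
  the simplices as cells) iff every group element mapping a simplex to itself
  fixes it pointwise.\<close>
definition simplicial_G_CW :: "('g, 'b) monoid_scheme \<Rightarrow> ('g \<Rightarrow> 'w \<Rightarrow> 'w) \<Rightarrow> 'w set set \<Rightarrow> bool" where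
  "simplicial_G_CW G \<rho> L \<longleftrightarrow>
     (\<forall>v\<in>\<Union>L. \<rho> \<one>\<^bsub>G\<^esub> v = v) \<and>
     (\<forall>g\<in>carrier G. \<forall>h\<in>carrier G. \<forall>v\<in>\<Union>L. \<rho> (g \<otimes>\<^bsub>G\<^esub> h) v = \<rho> g (\<rho> h v)) \<and>
     (\<forall>g\<in>carrier G. \<forall>\<sigma>\<in>L. \<rho> g ` \<sigma> \<in> L) \<and>
     (\<forall>g\<in>carrier G. \<forall>\<sigma>\<in>L. \<rho> g ` \<sigma> = \<sigma> \<longrightarrow> (\<forall>v\<in>\<sigma>. \<rho> g v = v))"

definition cocompact :: "('g, 'b) monoid_scheme \<Rightarrow> ('g \<Rightarrow> 'w \<Rightarrow> 'w) \<Rightarrow> 'w set set \<Rightarrow> bool" where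
  "cocompact G \<rho> L \<longleftrightarrow> finite ((\<lambda>\<sigma>. (\<lambda>g. \<rho> g ` \<sigma>) ` carrier G) ` L)"

definition stabiliser :: "('g, 'b) monoid_scheme \<Rightarrow> ('g \<Rightarrow> 'w \<Rightarrow> 'w) \<Rightarrow> 'w set \<Rightarrow> 'g set" where
  "stabiliser G \<rho> \<sigma> = {g \<in> carrier G. \<rho> g ` \<sigma> = \<sigma>}"

end

theory Submission
  imports Defs
begin

abbreviation "PT \<equiv> powertop_real UNIV"

lemma istop_real: "istopology (\<lambda>U. U \<subseteq> (\<Union>\<sigma>\<in>K. geom_simplex \<sigma>) \<and>
      (\<forall>\<sigma>\<in>K. openin (subtopology (powertop_real UNIV) (geom_simplex \<sigma>)) (U \<inter> geom_simplex \<sigma>)))"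
  unfolding istopology_def
proof (rule conjI; intro allI impI)
  fix S T assume hS: "S \<subseteq> (\<Union>\<sigma>\<in>K. geom_simplex \<sigma>) \<and>
      (\<forall>\<sigma>\<in>K. openin (subtopology (powertop_real UNIV) (geom_simplex \<sigma>)) (S \<inter> geom_simplex \<sigma>))"
    and hT: "T \<subseteq> (\<Union>\<sigma>\<in>K. geom_simplex \<sigma>) \<and>
      (\<forall>\<sigma>\<in>K. openin (subtopology (powertop_real UNIV) (geom_simplex \<sigma>)) (T \<inter> geom_simplex \<sigma>))"
  show "S \<inter> T \<subseteq> (\<Union>\<sigma>\<in>K. geom_simplex \<sigma>) \<and>
      (\<forall>\<sigma>\<in>K. openin (subtopology (powertop_real UNIV) (geom_simplex \<sigma>)) (S \<inter> T \<inter> geom_simplex \<sigma>))"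
  proof (intro conjI ballI)
    show "S \<inter> T \<subseteq> (\<Union>\<sigma>\<in>K. geom_simplex \<sigma>)" using hS by blast
    fix \<sigma> assume s: "\<sigma> \<in> K"
    have eq: "S \<inter> T \<inter> geom_simplex \<sigma> = (S \<inter> geom_simplex \<sigma>) \<inter> (T \<inter> geom_simplex \<sigma>)" by auto
    have "openin (subtopology (powertop_real UNIV) (geom_simplex \<sigma>)) ((S \<inter> geom_simplex \<sigma>) \<inter> (T \<inter> geom_simplex \<sigma>))"
      apply (rule openin_Int) using hS hT s by auto
    then show "openin (subtopology (powertop_real UNIV) (geom_simplex \<sigma>)) (S \<inter> T \<inter> geom_simplex \<sigma>)"
      by (simp only: eq)
  qed
next
  fix \<K> assume h: "\<forall>V\<in>\<K>. V \<subseteq> (\<Union>\<sigma>\<in>K. geom_simplex \<sigma>) \<and>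
      (\<forall>\<sigma>\<in>K. openin (subtopology (powertop_real UNIV) (geom_simplex \<sigma>)) (V \<inter> geom_simplex \<sigma>))"
  show "\<Union>\<K> \<subseteq> (\<Union>\<sigma>\<in>K. geom_simplex \<sigma>) \<and>
      (\<forall>\<sigma>\<in>K. openin (subtopology (powertop_real UNIV) (geom_simplex \<sigma>)) (\<Union>\<K> \<inter> geom_simplex \<sigma>))"
  proof (intro conjI ballI)
    show "\<Union>\<K> \<subseteq> (\<Union>\<sigma>\<in>K. geom_simplex \<sigma>)" using h by blast
    fix \<sigma> assume s: "\<sigma> \<in> K"
    have eq: "\<Union>\<K> \<inter> geom_simplex \<sigma> = \<Union>((\<lambda>U. U \<inter> geom_simplex \<sigma>) ` \<K>)" by auto
    show "openin (subtopology (powertop_real UNIV) (geom_simplex \<sigma>)) (\<Union>\<K> \<inter> geom_simplex \<sigma>)"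
      unfolding eq apply (rule openin_Union) using h s by auto
  qed
qed

lemma openin_real: "openin (realisation K) U \<longleftrightarrow> U \<subseteq> (\<Union>\<sigma>\<in>K. geom_simplex \<sigma>) \<and>
      (\<forall>\<sigma>\<in>K. openin (subtopology PT (geom_simplex \<sigma>)) (U \<inter> geom_simplex \<sigma>))"
  unfolding realisation_def using istop_real[of K] by (simp add: topology_inverse')

lemma topspace_real: "topspace (realisation K) = (\<Union>\<sigma>\<in>K. geom_simplex \<sigma>)"
proof -
  have "openin (realisation K) (\<Union>\<sigma>\<in>K. geom_simplex \<sigma>)"
    unfolding openin_real
  proof (intro conjI ballI)
    fix \<sigma> assume "\<sigma> \<in> K"
    then have "(\<Union>\<sigma>\<in>K. geom_simplex \<sigma>) \<inter> geom_simplex \<sigma> = topspace (subtopology PT (geom_simplex \<sigma>))"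
      by auto
    then show "openin (subtopology PT (geom_simplex \<sigma>)) ((\<Union>\<sigma>\<in>K. geom_simplex \<sigma>) \<inter> geom_simplex \<sigma>)"
      by (metis openin_topspace)
  qed simp
  then have "(\<Union>\<sigma>\<in>K. geom_simplex \<sigma>) \<subseteq> topspace (realisation K)"
    by (rule openin_subset)
  moreover have "topspace (realisation K) \<subseteq> (\<Union>\<sigma>\<in>K. geom_simplex \<sigma>)"
    using openin_real[of K "topspace (realisation K)"] by simp
  ultimately show ?thesis by blast
qed

lemma incl_cont: "\<sigma> \<in> K \<Longrightarrow> continuous_map (subtopology PT (geom_simplex \<sigma>)) (realisation K) (\<lambda>x. x)"
  unfolding continuous_map_def
proof (intro conjI allI impI)
  assume "\<sigma> \<in> K"
  show "(\<lambda>x. x) \<in> topspace (subtopology PT (geom_simplex \<sigma>)) \<rightarrow> topspace (realisation K)"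
    using \<open>\<sigma> \<in> K\<close> by (auto simp: topspace_real)
  fix U assume "openin (realisation K) U"
  then have "openin (subtopology PT (geom_simplex \<sigma>)) (U \<inter> geom_simplex \<sigma>)"
    using \<open>\<sigma> \<in> K\<close> openin_real by blast
  moreover have "{x \<in> topspace (subtopology PT (geom_simplex \<sigma>)). x \<in> U} = U \<inter> geom_simplex \<sigma>"
    by auto
  ultimately show "openin (subtopology PT (geom_simplex \<sigma>)) {x \<in> topspace (subtopology PT (geom_simplex \<sigma>)). x \<in> U}"
    by simp
qed

definition "ZZ K = sum_topology (\<lambda>\<sigma>. subtopology PT (geom_simplex \<sigma>)) K"

lemma topspace_ZZ: "topspace (ZZ K) = Sigma K geom_simplex"
  by (auto simp: ZZ_def)

lemma quot_ZZ: "quotient_map (ZZ K) (realisation K) snd"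
  unfolding quotient_map_def
proof (intro conjI allI impI)
  show "snd ` topspace (ZZ K) = topspace (realisation K)"
    by (force simp: topspace_ZZ topspace_real)
  fix U assume U: "U \<subseteq> topspace (realisation K)"
  have e: "{x. (\<sigma>, x) \<in> {x \<in> topspace (ZZ K). snd x \<in> U}} = U \<inter> geom_simplex \<sigma>" if "\<sigma> \<in> K" for \<sigma>
    using that by (auto simp: topspace_ZZ)
  show "openin (ZZ K) {x \<in> topspace (ZZ K). snd x \<in> U} = openin (realisation K) U"
    unfolding ZZ_def openin_sum_topology openin_real using U e
    by (auto simp: topspace_real ZZ_def)
qed

lemma snd_cont: fixes K :: "'v set set" shows "continuous_map (ZZ K) (PT :: ('v \<Rightarrow> real) topology) snd"
  unfolding continuous_map_def
proof (intro conjI allI impI)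
  show "snd \<in> topspace (ZZ K) \<rightarrow> topspace PT" by simp
  fix U :: "('v \<Rightarrow> real) set" assume U: "openin PT U"
  have "{x \<in> topspace (ZZ K). snd x \<in> U} = Sigma K (\<lambda>\<sigma>. U \<inter> geom_simplex \<sigma>)"
    by (auto simp: topspace_ZZ)
  moreover have "openin (subtopology PT (geom_simplex \<sigma>)) (U \<inter> geom_simplex \<sigma>)" for \<sigma>
    using U by (simp add: openin_subtopology_Int)
  ultimately show "openin (ZZ K) {x \<in> topspace (ZZ K). snd x \<in> U}"
    by (simp add: ZZ_def openin_disjoint_union)
qed

lemma I_loc: "locally_compact_space (top_of_set {0..1::real})"
  by (simp add: compact_imp_locally_compact_space compact_space_subtopology)

lemma I_haus: "Hausdorff_space (top_of_set {0..1::real})"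
  by (simp add: Hausdorff_space_subtopology)

lemma contractible_real:
  fixes K :: "'v set set" and v0 :: 'v
  assumes v0K: "{v0} \<in> K" and insK: "\<And>\<sigma>. \<sigma> \<in> K \<Longrightarrow> insert v0 \<sigma> \<in> K"
    and finK: "\<And>\<sigma>. \<sigma> \<in> K \<Longrightarrow> finite \<sigma>"
  shows "contractible_space (realisation K)"
proof -
  define h where "h = (\<lambda>(t::real, f::'v\<Rightarrow>real). \<lambda>v. (1-t)*f v + t*(if v=v0 then 1 else 0))"
  define Q where "Q = (\<lambda>(t::real, y::'v set \<times> ('v\<Rightarrow>real)). (t, snd y))"
  let ?I = "top_of_set {0..1::real}"
  have quot: "quotient_map (prod_topology ?I (ZZ K)) (prod_topology ?I (realisation K)) Q"
    unfolding Q_def by (rule quotient_map_prod_right[OF I_loc _ quot_ZZ]) (simp add: I_haus)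
  have cfst: "continuous_map (prod_topology ?I (ZZ K)) euclideanreal fst"
    using continuous_map_fst continuous_map_into_fulltopology by blast
  have c1: "continuous_map (prod_topology ?I (ZZ K)) PT (snd \<circ> snd)"
    by (rule continuous_map_compose[OF continuous_map_snd snd_cont])
  have c2: "continuous_map (prod_topology ?I (ZZ K)) euclideanreal (\<lambda>x. snd (snd x) v)" for v
    using continuous_map_compose[OF c1 continuous_map_product_projection[of v UNIV "\<lambda>_. euclideanreal"]]
    by (simp add: o_def)
  have cPT: "continuous_map (prod_topology ?I (ZZ K)) PT (h \<circ> Q)"
  proof (rule iffD2[OF continuous_map_componentwise_UNIV], rule allI)
    fix v
    have "(\<lambda>x. (h \<circ> Q) x v) = (\<lambda>x. (1 - fst x) * snd (snd x) v + fst x * (if v=v0 then 1 else 0))"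
      by (auto simp: h_def Q_def)
    moreover have "continuous_map (prod_topology ?I (ZZ K)) euclideanreal
        (\<lambda>x. (1 - fst x) * snd (snd x) v + fst x * (if v=v0 then 1 else 0))"
      by (intro continuous_intros cfst c2)
    ultimately show "continuous_map (prod_topology ?I (ZZ K)) euclideanreal (\<lambda>x. (h \<circ> Q) x v)"
      by simp
  qed
  have img: "(h \<circ> Q) x \<in> geom_simplex (insert v0 \<sigma>)"
    if sK: "\<sigma> \<in> K" and xin: "x \<in> {0..1} \<times> ({\<sigma>} \<times> geom_simplex \<sigma>)" for \<sigma> x
  proof -
    obtain t f where x: "x = (t, (\<sigma>, f))" and t: "0 \<le> t" "t \<le> 1" and f: "f \<in> geom_simplex \<sigma>"
      using xin by auto
    have fin: "finite \<sigma>" using finK sK by blast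
    have sf: "sum f (insert v0 \<sigma>) = 1"
      using f fin by (cases "v0 \<in> \<sigma>") (auto simp: geom_simplex_def insert_absorb)
    have "(\<Sum>v\<in>insert v0 \<sigma>. (1-t)*f v + t*(if v=v0 then 1 else 0)) =
          (1-t) * sum f (insert v0 \<sigma>) + t * (\<Sum>v\<in>insert v0 \<sigma>. (if v=v0 then 1 else 0))"
      by (simp add: sum.distrib sum_distrib_left)
    also have "\<dots> = 1" using sf fin by simp
    finally have "(\<Sum>v\<in>insert v0 \<sigma>. (1-t)*f v + t*(if v=v0 then 1 else 0)) = 1" .
    moreover have "\<forall>v. 0 \<le> (1-t)*f v + t*(if v=v0 then 1 else 0)"
      using f t by (auto simp: geom_simplex_def)
    moreover have "\<forall>v. v \<notin> insert v0 \<sigma> \<longrightarrow> (1-t)*f v + t*(if v=v0 then 1 else 0) = 0"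
      using f by (auto simp: geom_simplex_def)
    ultimately show ?thesis by (simp add: x h_def Q_def geom_simplex_def)
  qed
  have cont: "continuous_map (prod_topology ?I (ZZ K)) (realisation K) (h \<circ> Q)"
  proof (rule pasting_lemma[where I=K and T="\<lambda>\<sigma>. {0..1} \<times> ({\<sigma>} \<times> geom_simplex \<sigma>)" and f="\<lambda>_. h \<circ> Q"])
    fix \<sigma> assume s: "\<sigma> \<in> K"
    have "openin (ZZ K) ({\<sigma>} \<times> geom_simplex \<sigma>)"
      unfolding ZZ_def openin_sum_topology
    proof (intro conjI ballI)
      show "{\<sigma>} \<times> geom_simplex \<sigma> \<subseteq> Sigma K (topspace \<circ> (\<lambda>\<sigma>. subtopology PT (geom_simplex \<sigma>)))"
        using s by auto
      fix i assume "i \<in> K"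
      show "openin (subtopology PT (geom_simplex i)) {x. (i, x) \<in> {\<sigma>} \<times> geom_simplex \<sigma>}"
      proof (cases "i = \<sigma>")
        case True
        then have "{x. (i, x) \<in> {\<sigma>} \<times> geom_simplex \<sigma>} = topspace (subtopology PT (geom_simplex i))"
          by auto
        then show ?thesis by (metis openin_topspace)
      next
        case False then show ?thesis by simp
      qed
    qed
    then show "openin (prod_topology ?I (ZZ K)) ({0..1} \<times> ({\<sigma>} \<times> geom_simplex \<sigma>))"
      using openin_topspace[of ?I] by (simp add: openin_prod_Times_iff)
    have "continuous_map (subtopology (prod_topology ?I (ZZ K)) ({0..1} \<times> ({\<sigma>} \<times> geom_simplex \<sigma>)))
            (subtopology PT (geom_simplex (insert v0 \<sigma>))) (h \<circ> Q)"
      using img[OF s] by (intro continuous_map_into_subtopology continuous_map_from_subtopology cPT) auto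
    then show "continuous_map (subtopology (prod_topology ?I (ZZ K)) ({0..1} \<times> ({\<sigma>} \<times> geom_simplex \<sigma>)))
            (realisation K) (h \<circ> Q)"
      using continuous_map_compose[OF _ incl_cont[OF insK[OF s]]] by (simp add: o_def)
  next
    fix x assume "x \<in> topspace (prod_topology ?I (ZZ K))"
    then show "\<exists>j. j \<in> K \<and> x \<in> {0..1} \<times> ({j} \<times> geom_simplex j) \<and> (h \<circ> Q) x = (h \<circ> Q) x"
      by (auto simp: topspace_ZZ)
  qed auto
  have hc: "continuous_map (prod_topology ?I (realisation K)) (realisation K) h"
    by (rule continuous_compose_quotient_map[OF quot cont])
  have "homotopic_with (\<lambda>x. True) (realisation K) (realisation K) id (\<lambda>x. (\<lambda>v. if v=v0 then 1 else 0))"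
    unfolding homotopic_with_def
    apply (rule exI[of _ h])
    apply (intro conjI)
       apply (rule hc)
      apply (auto simp: h_def)
    done
  then show ?thesis unfolding contractible_space_def by blast
qed

locale gp = group +
  fixes S :: "'a set" and Ps :: "'a set list"
  assumes subg: "\<forall>P\<in>set Ps. subgroup P G"
begin

lemma Ps_sub: "i < length Ps \<Longrightarrow> Ps ! i \<subseteq> carrier G"
  using subg nth_mem subgroup.subset by blast

lemma Ps_subg: "i < length Ps \<Longrightarrow> subgroup (Ps ! i) G"
  using subg nth_mem by blast

lemma cone_sub: "(i, A) \<in> cone_vertices G Ps \<Longrightarrow> A \<subseteq> carrier G"
proof -
  assume "(i, A) \<in> cone_vertices G Ps"
  then obtain g where "i < length Ps" "g \<in> carrier G" "A = g <# (Ps ! i)"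
    unfolding cone_vertices_def by auto
  then show ?thesis using Ps_sub l_coset_subset_G by simp
qed

lemma vact_Inr: "vact G g (Inr c) = Inr (fst c, g <# snd c)"
  by (cases c) simp

lemma vact_vert: "g \<in> carrier G \<Longrightarrow> v \<in> vertices G Ps \<Longrightarrow> vact G g v \<in> vertices G Ps"
proof (cases v)
  case (Inr c)
  assume g: "g \<in> carrier G" and v: "v \<in> vertices G Ps"
  then obtain i k where c: "c = (i, k <# Ps ! i)" "i < length Ps" "k \<in> carrier G"
    using Inr by (auto simp: vertices_def cone_vertices_def)
  then have "vact G g v = Inr (i, (g \<otimes> k) <# Ps ! i)"
    using Inr g Ps_sub lcos_m_assoc by (simp add: vact_Inr)
  then show ?thesis using c g by (auto simp: vertices_def cone_vertices_def)
qed (auto simp: vertices_def)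

lemma vact_one: "v \<in> vertices G Ps \<Longrightarrow> vact G \<one> v = v"
  unfolding vertices_def using cone_sub lcos_mult_one by auto

lemma vact_mult: "g \<in> carrier G \<Longrightarrow> h \<in> carrier G \<Longrightarrow> v \<in> vertices G Ps \<Longrightarrow>
   vact G (g \<otimes> h) v = vact G g (vact G h v)"
  unfolding vertices_def using cone_sub lcos_m_assoc m_assoc by auto

lemma vact_inv: "g \<in> carrier G \<Longrightarrow> v \<in> vertices G Ps \<Longrightarrow> vact G (inv g) (vact G g v) = v"
  using vact_mult[of "inv g" g v] vact_one by simp

lemma vact_inj: "g \<in> carrier G \<Longrightarrow> inj_on (vact G g) (vertices G Ps)"
  by (metis inj_onI vact_inv)

lemma wd_inv: "g \<in> carrier G \<Longrightarrow> x \<in> carrier G \<Longrightarrow> y \<in> carrier G \<Longrightarrow>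
   word_dist G S (g \<otimes> x) (g \<otimes> y) = word_dist G S x y"
  unfolding word_dist_def by (simp add: inv_mult_group m_assoc[symmetric]) (simp add: m_assoc)

lemma word_length_one: "word_length G S \<one> = 0"
  unfolding word_length_def by (rule Least_eq_0) (rule exI[of _ "[]"], simp)

lemma unicone_mono: "unicone G S Ps a U \<Longrightarrow> a \<le> b \<Longrightarrow> unicone G S Ps b U"
  unfolding unicone_def by (meson order_trans)

lemma Inl_vimage_vact: "g \<in> carrier G \<Longrightarrow> U \<subseteq> vertices G Ps \<Longrightarrow>
   Inl -` (vact G g ` U) = (\<lambda>h. g \<otimes> h) ` (Inl -` U)"
proof (intro equalityI subsetI)
  fix x assume g: "g \<in> carrier G" and U: "U \<subseteq> vertices G Ps"
  { assume "x \<in> Inl -` (vact G g ` U)"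
    then obtain u where u: "u \<in> U" "Inl x = vact G g u" by auto
    then show "x \<in> (\<lambda>h. g \<otimes> h) ` (Inl -` U)"
      by (cases u) (auto simp: vact_Inr) }
  { assume "x \<in> (\<lambda>h. g \<otimes> h) ` (Inl -` U)"
    then show "x \<in> Inl -` (vact G g ` U)" by force }
qed

lemma Inr_vimage_vact: "U \<subseteq> vertices G Ps \<Longrightarrow>
   Inr -` (vact G g ` U) = (\<lambda>(i,A). (i, g <# A)) ` (Inr -` U)"
proof (intro equalityI subsetI)
  fix x assume U: "U \<subseteq> vertices G Ps"
  { assume "x \<in> Inr -` (vact G g ` U)"
    then obtain u where u: "u \<in> U" "Inr x = vact G g u" by auto
    then show "x \<in> (\<lambda>(i,A). (i, g <# A)) ` (Inr -` U)"
      by (cases u) (force simp: vact_Inr)+ }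
  { assume "x \<in> (\<lambda>(i,A). (i, g <# A)) ` (Inr -` U)"
    then show "x \<in> Inr -` (vact G g ` U)" by (force simp: vact_Inr) }
qed

lemma Rhat_vact: assumes g: "g \<in> carrier G" and U: "U \<in> Rhat G S Ps a"
  shows "vact G g ` U \<in> Rhat G S Ps a"
proof -
  have u: "finite U" "U \<noteq> {}" "U \<subseteq> vertices G Ps"
    "\<forall>x\<in>Inl -` U. \<forall>y\<in>Inl -` U. word_dist G S x y \<le> a"
    "card (Inr -` U) \<le> 1"
    "\<forall>c\<in>Inr -` U. \<forall>x\<in>Inl -` U. \<exists>b\<in>snd c. word_dist G S x b \<le> a"
    using U by (auto simp: Rhat_def unicone_def)
  have Inlc: "Inl -` U \<subseteq> carrier G" using u(3) by (auto simp: vertices_def)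
  have Inlc': "\<And>x. Inl x \<in> U \<Longrightarrow> x \<in> carrier G" using Inlc by auto
  have finr: "finite (Inr -` U)" using u(1) by (simp add: finite_vimageI)
  show ?thesis
    unfolding Rhat_def unicone_def mem_Collect_eq
  proof (intro conjI)
    show "finite (vact G g ` U)" using u by simp
    show "vact G g ` U \<noteq> {}" using u by simp
    show "vact G g ` U \<subseteq> vertices G Ps" using u(3) vact_vert g by auto
    show "\<forall>x\<in>Inl -` vact G g ` U. \<forall>y\<in>Inl -` vact G g ` U. word_dist G S x y \<le> a"
      unfolding Inl_vimage_vact[OF g u(3)] using u(4) Inlc' g by (auto simp: wd_inv)
    have "card (Inr -` vact G g ` U) \<le> card (Inr -` U)"
      unfolding Inr_vimage_vact[OF u(3)] using finr by (rule card_image_le)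
    then show "card (Inr -` vact G g ` U) \<le> 1" using u(5) by simp
    show "\<forall>c\<in>Inr -` vact G g ` U. \<forall>x\<in>Inl -` vact G g ` U. \<exists>b\<in>snd c. word_dist G S x b \<le> a"
      unfolding Inl_vimage_vact[OF g u(3)] Inr_vimage_vact[OF u(3)]
    proof (intro ballI)
      fix c x assume c: "c \<in> (\<lambda>(i, A). (i, g <# A)) ` Inr -` U" and x: "x \<in> (\<otimes>) g ` Inl -` U"
      obtain i A where iA: "Inr (i, A) \<in> U" "c = (i, g <# A)" using c by auto
      obtain h where h: "Inl h \<in> U" "x = g \<otimes> h" using x by auto
      obtain b where b: "b \<in> A" "word_dist G S h b \<le> a" using u(6) iA h by force
      have Ac: "A \<subseteq> carrier G" using iA u(3) cone_sub by (auto simp: vertices_def)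
      have "g \<otimes> b \<in> snd c" using iA b by (auto simp: l_coset_def)
      moreover have "word_dist G S x (g \<otimes> b) \<le> a"
        using wd_inv[OF g, of h b] Ac b h Inlc' by auto
      ultimately show "\<exists>b\<in>snd c. word_dist G S x b \<le> a" by blast
    qed
  qed
qed

end

lemma chain_card_eq: "c \<in> bary K \<Longrightarrow> \<sigma> \<in> c \<Longrightarrow> \<tau> \<in> c \<Longrightarrow> finite \<sigma> \<Longrightarrow> finite \<tau> \<Longrightarrow>
   card \<sigma> = card \<tau> \<Longrightarrow> \<sigma> = \<tau>"
  unfolding bary_def by (metis (no_types, lifting) card_subset_eq mem_Collect_eq)

lemma chain_top: assumes c: "c \<in> bary K" and fin: "\<And>\<sigma>. \<sigma> \<in> K \<Longrightarrow> finite \<sigma>"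
  shows "\<exists>\<sigma>\<in>c. \<forall>\<tau>\<in>c. \<tau> \<subseteq> \<sigma>"
proof -
  have c1: "finite c" "c \<noteq> {}" "c \<subseteq> K" "\<forall>\<sigma>\<in>c. \<forall>\<tau>\<in>c. \<sigma> \<subseteq> \<tau> \<or> \<tau> \<subseteq> \<sigma>"
    using c by (auto simp: bary_def)
  have "Max (card ` c) \<in> card ` c" using c1 by (intro Max_in) auto
  then obtain \<sigma> where s: "\<sigma> \<in> c" "card \<sigma> = Max (card ` c)"
    by auto
  have "\<tau> \<subseteq> \<sigma>" if t: "\<tau> \<in> c" for \<tau>
  proof -
    have "card \<tau> \<le> card \<sigma>" using s t c1 by simp
    moreover have "finite \<tau>" using fin t c1 by blast
    ultimately show ?thesis using c1(4) s t
      by (metis card_seteq)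
  qed
  then show ?thesis using s by blast
qed

context gp
begin

lemma Rinf_single: "{Inl \<one>} \<in> Rhat_inf G S Ps"
proof -
  have e: "Inr -` {Inl \<one>} = ({} :: (nat \<times> 'a set) set)" by auto
  have "{Inl \<one>} \<in> Rhat G S Ps 0"
    by (simp add: e Rhat_def unicone_def vertices_def word_dist_def word_length_one)
  then show ?thesis unfolding Rhat_inf_def by blast
qed

lemma Rhat_fin: "\<sigma> \<in> Rhat G S Ps a \<Longrightarrow> finite \<sigma>"
  by (simp add: Rhat_def unicone_def)

lemma Rhat_vert: "\<sigma> \<in> Rhat G S Ps a \<Longrightarrow> \<sigma> \<subseteq> vertices G Ps"
  by (simp add: Rhat_def unicone_def)

lemma cone_nonempty: assumes "c \<in> cone_vertices G Ps" shows "\<exists>a. a \<in> snd c"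
proof -
  obtain i k where "c = (i, k <# Ps ! i)" "i < length Ps" "k \<in> carrier G"
    using assms by (auto simp: cone_vertices_def)
  then show ?thesis using lcos_self Ps_subg by auto
qed

lemma Rinf_ins: assumes s: "\<sigma> \<in> Rhat_inf G S Ps" shows "insert (Inl \<one>) \<sigma> \<in> Rhat_inf G S Ps"
proof -
  obtain a where sa: "unicone G S Ps a \<sigma>" using s by (auto simp: Rhat_inf_def Rhat_def)
  have u: "finite \<sigma>" "\<sigma> \<noteq> {}" "\<sigma> \<subseteq> vertices G Ps"
    "\<forall>x\<in>Inl -` \<sigma>. \<forall>y\<in>Inl -` \<sigma>. word_dist G S x y \<le> a"
    "card (Inr -` \<sigma>) \<le> 1"
    "\<forall>c\<in>Inr -` \<sigma>. \<forall>x\<in>Inl -` \<sigma>. \<exists>b\<in>snd c. word_dist G S x b \<le> a"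
    using sa by (auto simp: unicone_def)
  define pick where "pick c = (SOME b. b \<in> snd c)" for c :: "nat \<times> 'a set"
  have pick: "pick c \<in> snd c" if "c \<in> Inr -` \<sigma>" for c
  proof -
    have "c \<in> cone_vertices G Ps" using that u(3) by (auto simp: vertices_def)
    then show ?thesis unfolding pick_def using cone_nonempty someI_ex by metis
  qed
  have finl: "finite (Inl -` \<sigma>)" and finr: "finite (Inr -` \<sigma>)" using u(1) by (simp_all add: finite_vimageI)
  define b where "b = a + (\<Sum>g\<in>Inl -` \<sigma>. word_dist G S \<one> g + word_dist G S g \<one>)
     + (\<Sum>c\<in>Inr -` \<sigma>. word_dist G S \<one> (pick c))"
  have b1: "word_dist G S \<one> g \<le> b" "word_dist G S g \<one> \<le> b" if "g \<in> Inl -` \<sigma>" for g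
  proof -
    have "word_dist G S \<one> g + word_dist G S g \<one> \<le> (\<Sum>g\<in>Inl -` \<sigma>. word_dist G S \<one> g + word_dist G S g \<one>)"
      using member_le_sum[OF that _ finl, of "\<lambda>g. word_dist G S \<one> g + word_dist G S g \<one>"] by simp
    then show "word_dist G S \<one> g \<le> b" "word_dist G S g \<one> \<le> b" unfolding b_def by linarith+
  qed
  have b2: "word_dist G S \<one> (pick c) \<le> b" if "c \<in> Inr -` \<sigma>" for c
  proof -
    have "word_dist G S \<one> (pick c) \<le> (\<Sum>c\<in>Inr -` \<sigma>. word_dist G S \<one> (pick c))"
      using member_le_sum[OF that _ finr, of "\<lambda>c. word_dist G S \<one> (pick c)"] by simp
    then show ?thesis unfolding b_def by linarith
  qed
  have ab: "a \<le> b" unfolding b_def by simp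
  have w11: "word_dist G S \<one> \<one> = 0" by (simp add: word_dist_def word_length_one)
  have "unicone G S Ps b (insert (Inl \<one>) \<sigma>)"
    unfolding unicone_def
  proof (intro conjI)
    show "finite (insert (Inl \<one>) \<sigma>)" using u by simp
    show "insert (Inl \<one>) \<sigma> \<noteq> {}" by simp
    show "insert (Inl \<one>) \<sigma> \<subseteq> vertices G Ps" using u by (auto simp: vertices_def)
    have e1: "Inl -` insert (Inl \<one>) \<sigma> = insert \<one> (Inl -` \<sigma>)" by auto
    have e2: "Inr -` insert (Inl \<one>) \<sigma> = Inr -` \<sigma>" by auto
    show "\<forall>x\<in>Inl -` insert (Inl \<one>) \<sigma>. \<forall>y\<in>Inl -` insert (Inl \<one>) \<sigma>. word_dist G S x y \<le> b"
      unfolding e1 using u(4) ab b1 w11 by (auto intro: order_trans)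
    show "card (Inr -` insert (Inl \<one>) \<sigma>) \<le> 1" unfolding e2 by (rule u(5))
    show "\<forall>c\<in>Inr -` insert (Inl \<one>) \<sigma>. \<forall>x\<in>Inl -` insert (Inl \<one>) \<sigma>. \<exists>b'\<in>snd c. word_dist G S x b' \<le> b"
      unfolding e1 e2
    proof (intro ballI)
      fix c x assume c: "c \<in> Inr -` \<sigma>" and x: "x \<in> insert \<one> (Inl -` \<sigma>)"
      show "\<exists>b'\<in>snd c. word_dist G S x b' \<le> b"
      proof (cases "x = \<one>")
        case True then show ?thesis using pick[OF c] b2[OF c] by blast
      next
        case False then have "x \<in> Inl -` \<sigma>" using x by simp
        then show ?thesis using u(6) c ab by (meson order_trans)
      qed
    qed
  qed
  then show ?thesis by (auto simp: Rhat_inf_def Rhat_def)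
qed

lemma part1: "contractible_space (realisation (Rhat_inf G S Ps))"
  by (rule contractible_real[OF Rinf_single Rinf_ins]) (auto simp: Rhat_inf_def Rhat_def unicone_def)

end

context gp
begin

lemma bv_one: assumes s: "\<sigma> \<in> Rhat G S Ps a" shows "bary_vact G \<one> \<sigma> = \<sigma>"
proof -
  have "vact G \<one> ` \<sigma> = (\<lambda>v. v) ` \<sigma>"
  proof (rule image_cong[OF refl])
    fix v assume "v \<in> \<sigma>"
    then have "v \<in> vertices G Ps" using Rhat_vert[OF s] by (rule subsetD[rotated])
    then show "vact G \<one> v = v" by (rule vact_one)
  qed
  then show ?thesis unfolding bary_vact_def by simp
qed

lemma bv_mult: "\<sigma> \<in> Rhat G S Ps a \<Longrightarrow> g \<in> carrier G \<Longrightarrow> h \<in> carrier G \<Longrightarrow>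
   bary_vact G (g \<otimes> h) \<sigma> = bary_vact G g (bary_vact G h \<sigma>)"
proof -
  assume s: "\<sigma> \<in> Rhat G S Ps a" and g: "g \<in> carrier G" and h: "h \<in> carrier G"
  show ?thesis unfolding bary_vact_def image_image
  proof (rule image_cong[OF refl])
    fix v assume "v \<in> \<sigma>"
    then have "v \<in> vertices G Ps" using Rhat_vert[OF s] by (rule subsetD[rotated])
    then show "vact G (g \<otimes> h) v = vact G g (vact G h v)" by (rule vact_mult[OF g h])
  qed
qed

lemma bv_card: "\<sigma> \<in> Rhat G S Ps a \<Longrightarrow> g \<in> carrier G \<Longrightarrow> card (bary_vact G g \<sigma>) = card \<sigma>"
  unfolding bary_vact_def
  by (rule card_image, rule inj_on_subset[OF vact_inj Rhat_vert])

lemma bary_img: "c \<in> bary (Rhat G S Ps a) \<Longrightarrow> g \<in> carrier G \<Longrightarrow> bary_vact G g ` c \<in> bary (Rhat G S Ps a)"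
proof -
  assume c: "c \<in> bary (Rhat G S Ps a)" and g: "g \<in> carrier G"
  have c1: "finite c" "c \<noteq> {}" "c \<subseteq> Rhat G S Ps a" "\<forall>\<sigma>\<in>c. \<forall>\<tau>\<in>c. \<sigma> \<subseteq> \<tau> \<or> \<tau> \<subseteq> \<sigma>"
    using c by (auto simp: bary_def)
  have ch: "\<forall>\<sigma>\<in>bary_vact G g ` c. \<forall>\<tau>\<in>bary_vact G g ` c. \<sigma> \<subseteq> \<tau> \<or> \<tau> \<subseteq> \<sigma>"
  proof (intro ballI)
    fix \<sigma>' \<tau>' assume "\<sigma>' \<in> bary_vact G g ` c" "\<tau>' \<in> bary_vact G g ` c"
    then obtain \<sigma> \<tau> where "\<sigma> \<in> c" "\<tau> \<in> c" "\<sigma>' = vact G g ` \<sigma>" "\<tau>' = vact G g ` \<tau>"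
      by (auto simp: bary_vact_def)
    then show "\<sigma>' \<subseteq> \<tau>' \<or> \<tau>' \<subseteq> \<sigma>'" using c1(4) by (metis image_mono)
  qed
  have "bary_vact G g ` c \<subseteq> Rhat G S Ps a"
    using c1(3) Rhat_vact[OF g] by (auto simp: bary_vact_def)
  then show ?thesis using c1 ch by (simp add: bary_def)
qed

lemma fix_chain: assumes c: "c \<in> bary (Rhat G S Ps a)" and g: "g \<in> carrier G"
  and eq: "bary_vact G g ` c = c" and s: "\<sigma> \<in> c"
  shows "bary_vact G g \<sigma> = \<sigma>"
proof -
  have sR: "\<sigma> \<in> Rhat G S Ps a" using c s by (auto simp: bary_def)
  have i: "bary_vact G g \<sigma> \<in> c" using eq s by (metis imageI)
  have f: "finite (bary_vact G g \<sigma>)" using Rhat_fin[OF sR] by (simp add: bary_vact_def)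
  show ?thesis by (rule chain_card_eq[OF c i s f Rhat_fin[OF sR] bv_card[OF sR g]])
qed

lemma part2a: "simplicial_G_CW G (bary_vact G) (bary (Rhat G S Ps a))"
  unfolding simplicial_G_CW_def
proof (intro conjI ballI allI impI)
  fix v assume "v \<in> \<Union> (bary (Rhat G S Ps a))"
  then have "v \<in> Rhat G S Ps a" by (auto simp: bary_def)
  then show "bary_vact G \<one> v = v" by (rule bv_one)
next
  fix g h v assume "g \<in> carrier G" "h \<in> carrier G" "v \<in> \<Union> (bary (Rhat G S Ps a))"
  moreover have "v \<in> Rhat G S Ps a" using \<open>v \<in> \<Union> (bary (Rhat G S Ps a))\<close> by (auto simp: bary_def)
  ultimately show "bary_vact G (g \<otimes> h) v = bary_vact G g (bary_vact G h v)"
    using bv_mult by blast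
next
  fix g c assume "g \<in> carrier G" "c \<in> bary (Rhat G S Ps a)"
  then show "bary_vact G g ` c \<in> bary (Rhat G S Ps a)" by (rule bary_img[rotated])
next
  fix g c v assume g: "g \<in> carrier G" and c: "c \<in> bary (Rhat G S Ps a)"
    and e: "bary_vact G g ` c = c" and v: "v \<in> c"
  show "bary_vact G g v = v" by (rule fix_chain[OF c g e v])
qed

end

context gp begin
lemma part2c: assumes c: "c \<in> bary (Rhat G S Ps a)"
  and nc: "c \<notin> {{{Inr A}} | A. A \<in> cone_vertices G Ps}"
  shows "finite (stabiliser G (bary_vact G) c)"
proof -
  have c1: "finite c" "c \<noteq> {}" "c \<subseteq> Rhat G S Ps a" "\<forall>\<sigma>\<in>c. \<forall>\<tau>\<in>c. \<sigma> \<subseteq> \<tau> \<or> \<tau> \<subseteq> \<sigma>"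
    using c by (auto simp: bary_def)
  have "\<exists>\<sigma>\<in>c. \<exists>x. Inl x \<in> \<sigma>"
  proof (rule ccontr)
    assume nl: "\<not> (\<exists>\<sigma>\<in>c. \<exists>x. Inl x \<in> \<sigma>)"
    have sing: "\<exists>A. \<sigma> = {Inr A} \<and> A \<in> cone_vertices G Ps" if s: "\<sigma> \<in> c" for \<sigma>
    proof -
      have u: "finite \<sigma>" "\<sigma> \<noteq> {}" "\<sigma> \<subseteq> vertices G Ps" "card (Inr -` \<sigma>) \<le> 1"
        using s c1 by (auto simp: Rhat_def unicone_def)
      obtain v where v: "v \<in> \<sigma>" using u by auto
      obtain A where A: "v = Inr A" using v nl s by (cases v) auto
      have fr: "finite (Inr -` \<sigma>)" using u by (simp add: finite_vimageI)
      have all: "w = Inr A" if w: "w \<in> \<sigma>" for w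
      proof -
        obtain B where B: "w = Inr B" using w nl s by (cases w) auto
        have "A \<in> Inr -` \<sigma>" "B \<in> Inr -` \<sigma>" using A B v w by auto
        moreover have "\<forall>a1\<in>Inr -` \<sigma>. \<forall>a2\<in>Inr -` \<sigma>. a1 = a2"
          using u(4) card_le_Suc0_iff_eq[OF fr] by simp
        ultimately have "A = B" by blast
        then show ?thesis using B by simp
      qed
      have "\<sigma> \<subseteq> {Inr A}" using all by blast
      moreover have "Inr A \<in> \<sigma>" using v A by simp
      ultimately have "\<sigma> = {Inr A}" by blast
      moreover have "A \<in> cone_vertices G Ps" using u(3) v A by (auto simp: vertices_def)
      ultimately show ?thesis by blast
    qed
    obtain \<sigma>0 where s0: "\<sigma>0 \<in> c" using c1 by auto
    obtain A where A: "\<sigma>0 = {Inr A}" "A \<in> cone_vertices G Ps" using sing[OF s0] by blast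
    have allc: "\<tau> = \<sigma>0" if t: "\<tau> \<in> c" for \<tau>
    proof -
      obtain B where B: "\<tau> = {Inr B}" using sing[OF t] by blast
      have "\<tau> \<subseteq> \<sigma>0 \<or> \<sigma>0 \<subseteq> \<tau>" using c1(4) t s0 by blast
      then have "Inr B \<in> \<sigma>0 \<or> Inr A \<in> \<tau>" using A(1) B by auto
      then have "B = A" using A(1) B by auto
      then show ?thesis using A B by simp
    qed
    have "c \<subseteq> {\<sigma>0}" using allc by blast
    then have "c = {\<sigma>0}" using s0 by blast
    then have "c = {{Inr A}}" using A(1) by simp
    then show False using nc A(2) by blast
  qed
  then obtain \<sigma> x where s: "\<sigma> \<in> c" and x: "Inl x \<in> \<sigma>" by blast
  have sR: "\<sigma> \<in> Rhat G S Ps a" using s c1 by auto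
  have xc: "x \<in> carrier G" using Rhat_vert[OF sR] x by (auto simp: vertices_def)
  have "stabiliser G (bary_vact G) c \<subseteq> (\<lambda>y. y \<otimes> inv x) ` (Inl -` \<sigma>)"
  proof
    fix g assume "g \<in> stabiliser G (bary_vact G) c"
    then have g: "g \<in> carrier G" "bary_vact G g ` c = c" by (auto simp: stabiliser_def)
    then have "bary_vact G g \<sigma> = \<sigma>" using fix_chain[OF c] s by blast
    moreover have "vact G g (Inl x) \<in> vact G g ` \<sigma>" using x by blast
    ultimately have "Inl (g \<otimes> x) \<in> \<sigma>" unfolding bary_vact_def by simp
    moreover have "g = (g \<otimes> x) \<otimes> inv x" using g xc by (simp add: m_assoc)
    ultimately show "g \<in> (\<lambda>y. y \<otimes> inv x) ` (Inl -` \<sigma>)" by blast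
  qed
  moreover have "finite (Inl -` \<sigma>)" using Rhat_fin[OF sR] by (simp add: finite_vimageI)
  ultimately show ?thesis using finite_subset by blast
qed

end

context gp
begin

lemma foldr_closed: "set ws \<subseteq> carrier G \<Longrightarrow> foldr (\<lambda>x y. x \<otimes> y) ws \<one> \<in> carrier G"
  by (induction ws) auto

lemma foldr_mult: "set ws \<subseteq> carrier G \<Longrightarrow> z \<in> carrier G \<Longrightarrow>
  foldr (\<lambda>x y. x \<otimes> y) ws z = foldr (\<lambda>x y. x \<otimes> y) ws \<one> \<otimes> z"
proof (induction ws)
  case Nil then show ?case by simp
next
  case (Cons a ws)
  then have "foldr (\<lambda>x y. x \<otimes> y) ws \<one> \<in> carrier G" using foldr_closed by simp
  then show ?case using Cons by (simp add: m_assoc)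
qed

lemma gen_word: assumes "x \<in> generate G S" "S \<subseteq> carrier G"
  shows "\<exists>ws. set ws \<subseteq> S \<union> m_inv G ` S \<and> foldr (\<lambda>x y. x \<otimes> y) ws \<one> = x"
  using assms(1)
proof (induction rule: generate.induct)
  case one then show ?case by (intro exI[of _ "[]"]) simp
next
  case (incl h) then show ?case using assms(2) by (intro exI[of _ "[h]"]) auto
next
  case (inv h) then show ?case using assms(2) by (intro exI[of _ "[inv h]"]) auto
next
  case (eng h1 h2)
  then obtain ws1 ws2 where w: "set ws1 \<subseteq> S \<union> m_inv G ` S" "foldr (\<lambda>x y. x \<otimes> y) ws1 \<one> = h1"
    "set ws2 \<subseteq> S \<union> m_inv G ` S" "foldr (\<lambda>x y. x \<otimes> y) ws2 \<one> = h2" by blast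
  have sc: "S \<union> m_inv G ` S \<subseteq> carrier G" using assms(2) by auto
  have "foldr (\<lambda>x y. x \<otimes> y) (ws1 @ ws2) \<one> = h1 \<otimes> h2"
    using foldr_mult[of ws1 "foldr (\<lambda>x y. x \<otimes> y) ws2 \<one>"] foldr_closed[of ws2] w sc by auto
  then show ?case using w by (intro exI[of _ "ws1 @ ws2"]) auto
qed

lemma B_finite: assumes fS: "finite S" and sS: "S \<subseteq> carrier G" and gS: "generate G S = carrier G"
  shows "finite {h \<in> carrier G. word_length G S h \<le> a}"
proof -
  let ?W = "{ws. set ws \<subseteq> S \<union> m_inv G ` S \<and> length ws \<le> a}"
  have "finite ?W" using fS by (intro finite_lists_length_le) auto
  moreover have "{h \<in> carrier G. word_length G S h \<le> a} \<subseteq> (\<lambda>ws. foldr (\<lambda>x y. x \<otimes> y) ws \<one>) ` ?W"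
  proof
    fix h assume h: "h \<in> {h \<in> carrier G. word_length G S h \<le> a}"
    then have "\<exists>ws. set ws \<subseteq> S \<union> m_inv G ` S \<and> foldr (\<lambda>x y. x \<otimes> y) ws \<one> = h"
      using gen_word sS gS by auto
    then have "\<exists>n ws. length ws = n \<and> set ws \<subseteq> S \<union> m_inv G ` S \<and> foldr (\<lambda>x y. x \<otimes> y) ws \<one> = h"
      by blast
    then have "\<exists>ws. length ws = word_length G S h \<and> set ws \<subseteq> S \<union> m_inv G ` S \<and> foldr (\<lambda>x y. x \<otimes> y) ws \<one> = h"
      unfolding word_length_def by (rule LeastI_ex)
    then show "h \<in> (\<lambda>ws. foldr (\<lambda>x y. x \<otimes> y) ws \<one>) ` ?W" using h by force
  qed
  ultimately show ?thesis using finite_subset by blast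
qed

end

context gp
begin

lemma orb_eq: assumes c: "c \<in> bary (Rhat G S Ps a)" and x: "x \<in> carrier G"
  shows "(\<lambda>g. bary_vact G g ` (bary_vact G x ` c)) ` carrier G = (\<lambda>g. bary_vact G g ` c) ` carrier G"
proof -
  have cR: "c \<subseteq> Rhat G S Ps a" using c by (auto simp: bary_def)
  have comp: "bary_vact G g ` (bary_vact G x ` c) = bary_vact G (g \<otimes> x) ` c" if g: "g \<in> carrier G" for g
    unfolding image_image
  proof (intro image_cong refl)
    fix \<sigma> assume "\<sigma> \<in> c"
    then show "bary_vact G g (bary_vact G x \<sigma>) = bary_vact G (g \<otimes> x) \<sigma>"
      using bv_mult[of \<sigma> a g x] cR g x by auto
  qed
  have surj: "(\<lambda>g. g \<otimes> x) ` carrier G = carrier G"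
  proof (intro equalityI subsetI)
    fix y assume y: "y \<in> carrier G"
    then have "y = (y \<otimes> inv x) \<otimes> x" using x by (simp add: m_assoc)
    moreover have "y \<otimes> inv x \<in> carrier G" using x y by simp
    ultimately show "y \<in> (\<lambda>g. g \<otimes> x) ` carrier G" by blast
  qed (use x in auto)
  have "(\<lambda>g. bary_vact G g ` (bary_vact G x ` c)) ` carrier G = (\<lambda>g. bary_vact G (g \<otimes> x) ` c) ` carrier G"
    by (rule image_cong[OF refl]) (rule comp)
  also have "\<dots> = (\<lambda>g. bary_vact G g ` c) ` ((\<lambda>g. g \<otimes> x) ` carrier G)"
    by (simp add: image_image)
  also have "\<dots> = (\<lambda>g. bary_vact G g ` c) ` carrier G" by (simp only: surj)
  finally show ?thesis .
qed

lemma part2b: assumes fS: "finite S" and sS: "S \<subseteq> carrier G" and gS: "generate G S = carrier G"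
  shows "cocompact G (bary_vact G) (bary (Rhat G S Ps a))"
proof -
  define B where "B = {h \<in> carrier G. word_length G S h \<le> a}"
  define V where "V = Inl ` B \<union> Inr ` ((\<lambda>(i,b). (i, b <# Ps ! i)) ` ({..<length Ps} \<times> B))"
  define F where "F = {c \<in> bary (Rhat G S Ps a). \<Union>c \<subseteq> V}"
  have finB: "finite B" unfolding B_def by (rule B_finite[OF fS sS gS])
  have one_B: "\<one> \<in> B" unfolding B_def by (simp add: word_length_one)
  have finV: "finite V" unfolding V_def using finB by simp
  have "F \<subseteq> Pow (Pow V)" unfolding F_def by auto
  then have finF: "finite F" using finV by (meson finite_Pow_iff finite_subset)
  have key: "\<exists>c0\<in>F. (\<lambda>g. bary_vact G g ` c) ` carrier G = (\<lambda>g. bary_vact G g ` c0) ` carrier G"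
    if c: "c \<in> bary (Rhat G S Ps a)" for c
  proof -
    have cR: "c \<subseteq> Rhat G S Ps a" using c by (auto simp: bary_def)
    obtain \<sigma> where s: "\<sigma> \<in> c" and top: "\<forall>\<tau>\<in>c. \<tau> \<subseteq> \<sigma>"
      using chain_top[OF c] Rhat_fin by blast
    have Uc: "\<Union>c = \<sigma>" using s top by blast
    have sR: "\<sigma> \<in> Rhat G S Ps a" using s cR by blast
    have u: "finite \<sigma>" "\<sigma> \<noteq> {}" "\<sigma> \<subseteq> vertices G Ps"
      "\<forall>x\<in>Inl -` \<sigma>. \<forall>y\<in>Inl -` \<sigma>. word_dist G S x y \<le> a"
      "card (Inr -` \<sigma>) \<le> 1"
      "\<forall>c\<in>Inr -` \<sigma>. \<forall>x\<in>Inl -` \<sigma>. \<exists>b\<in>snd c. word_dist G S x b \<le> a"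
      using sR by (auto simp: Rhat_def unicone_def)
    have coneI: "\<exists>i k. cc = (i, k <# Ps ! i) \<and> i < length Ps \<and> k \<in> carrier G" if "Inr cc \<in> \<sigma>" for cc
      using that u(3) by (auto simp: vertices_def cone_vertices_def)
    obtain x where xc: "x \<in> carrier G" and xV: "vact G (inv x) ` \<sigma> \<subseteq> V"
    proof (cases "\<exists>y. Inl y \<in> \<sigma>")
      case True
      then obtain y where y: "Inl y \<in> \<sigma>" by blast
      have yc: "y \<in> carrier G" using y u(3) by (auto simp: vertices_def)
      have "vact G (inv y) v \<in> V" if v: "v \<in> \<sigma>" for v
      proof (cases v)
        case (Inl z)
        have zc: "z \<in> carrier G" using v Inl u(3) by (auto simp: vertices_def)
        have "word_dist G S y z \<le> a" using u(4) y v Inl by auto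
        then have "inv y \<otimes> z \<in> B" using yc zc by (simp add: B_def word_dist_def)
        then show ?thesis using Inl by (simp add: V_def)
      next
        case (Inr cc)
        obtain i k where cc: "cc = (i, k <# Ps ! i)" "i < length Ps" "k \<in> carrier G"
          using coneI v Inr by blast
        obtain b where b: "b \<in> snd cc" "word_dist G S y b \<le> a" using u(6) v Inr y by force
        have bk: "b \<in> k <# Ps ! i" using b cc by simp
        have bc: "b \<in> carrier G" using l_coset_carrier[OF bk cc(3) Ps_subg[OF cc(2)]] .
        have eqc: "k <# Ps ! i = b <# Ps ! i" using l_repr_independence[OF bk cc(3) Ps_subg[OF cc(2)]] .
        have "vact G (inv y) v = Inr (i, (inv y \<otimes> b) <# Ps ! i)"
          using Inr cc eqc lcos_m_assoc[OF Ps_sub[OF cc(2)], of "inv y" b] yc bc by simp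
        moreover have "inv y \<otimes> b \<in> B" using b(2) yc bc by (simp add: B_def word_dist_def)
        ultimately show ?thesis using cc(2) unfolding V_def by force
      qed
      then show ?thesis using that yc by blast
    next
      case False
      obtain v where v: "v \<in> \<sigma>" using u by auto
      obtain cc where vcc: "v = Inr cc" using v False by (cases v) auto
      obtain i k where cc: "cc = (i, k <# Ps ! i)" "i < length Ps" "k \<in> carrier G"
        using coneI v vcc by blast
      have fr: "finite (Inr -` \<sigma>)" using u by (simp add: finite_vimageI)
      have one: "\<forall>a1\<in>Inr -` \<sigma>. \<forall>a2\<in>Inr -` \<sigma>. a1 = a2"
        using u(5) card_le_Suc0_iff_eq[OF fr] by simp
      have "vact G (inv k) w \<in> V" if w: "w \<in> \<sigma>" for w
      proof -
        obtain dd where wdd: "w = Inr dd" using w False by (cases w) auto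
        have "dd = cc" using one w wdd v vcc by auto
        then have "vact G (inv k) w = Inr (i, (inv k \<otimes> k) <# Ps ! i)"
          using wdd cc lcos_m_assoc[OF Ps_sub[OF cc(2)], of "inv k" k] by simp
        also have "\<dots> = Inr (i, \<one> <# Ps ! i)" using cc(3) by simp
        finally show ?thesis using one_B cc(2) unfolding V_def by force
      qed
      then show ?thesis using that cc(3) by blast
    qed
    define c0 where "c0 = bary_vact G (inv x) ` c"
    have c0b: "c0 \<in> bary (Rhat G S Ps a)" unfolding c0_def using bary_img[OF c] xc by simp
    have "\<Union>c0 = vact G (inv x) ` \<sigma>" unfolding c0_def bary_vact_def using Uc by auto
    then have "c0 \<in> F" using c0b xV by (simp add: F_def)
    moreover have "(\<lambda>g. bary_vact G g ` c0) ` carrier G = (\<lambda>g. bary_vact G g ` c) ` carrier G"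
      unfolding c0_def using orb_eq[OF c] xc by simp
    ultimately show ?thesis by metis
  qed
  have "(\<lambda>c. (\<lambda>g. bary_vact G g ` c) ` carrier G) ` bary (Rhat G S Ps a)
      \<subseteq> (\<lambda>c. (\<lambda>g. bary_vact G g ` c) ` carrier G) ` F"
    using key by blast
  then show ?thesis unfolding cocompact_def using finF finite_subset by blast
qed

end

theorem lemma4p4:
  fixes G :: "'g monoid" and S :: "'g set" and Ps :: "'g set list"
  assumes "group G"
    and "Ps \<noteq> []"
    and "\<forall>P\<in>set Ps. subgroup P G"
    and "finite S" and "S \<subseteq> carrier G" and "generate G S = carrier G"
  shows "contractible_space (realisation (Rhat_inf G S Ps)) \<and>
    (\<forall>\<alpha>::nat.
       simplicial_G_CW G (bary_vact G) (bary (Rhat G S Ps \<alpha>)) \<and>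
       cocompact G (bary_vact G) (bary (Rhat G S Ps \<alpha>)) \<and>
       (\<forall>c\<in>bary (Rhat G S Ps \<alpha>).
          c \<notin> {{{Inr A}} | A. A \<in> cone_vertices G Ps} \<longrightarrow>
          finite (stabiliser G (bary_vact G) c)))"
  proof -
  interpret gp G S Ps using assms(1,3) by (simp add: gp_def gp_axioms_def)
  show ?thesis using part1 part2a part2b[OF assms(4,5,6)] part2c by blast
qed

end
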